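(* Let $n\in\mathbb{N}$, $a<b$, and let $f:[a,b]\to\mathbb{R}$ be $2n$-convex. If $x_1,\dots,x_n\in(a,b)$ and $x_{n+1}=b$, then there exists a polynomial $p\in\Pi_{2n}$ such that $p(x_i)=f(x_i)$ for $i=1,\dots,n+1$ and $p(x)\ge f(x)$ for all $x\in[a,b]$.
   Context: $\Pi_m$ denotes the set of real polynomials of degree at most $m$. Divided differences are defined recursively by $[x_1;f]:=f(x_1)$ and $[x_1,\dots,x_{m+1};f]:=\frac{[x_2,\dots,x_{m+1};f]-[x_1,\dots,x_m;f]}{x_{m+1}-x_1}$ for pairwise distinct points. For $m\in\mathbb{N}$, a function $f$ on an interval $I$ is called $m$-convex if $[x_1,\dots,x_{m+2};f]\ge 0$ for all pairwise distinct $x_1,\dots,x_{m+2}\in I$. *)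

theory Defs
  imports Complex_Main "HOL-Computational_Algebra.Polynomial"
begin

text \<open>The empty list is given the (irrelevant) value 0.\<close>
fun divdiff :: "real list \<Rightarrow> (real \<Rightarrow> real) \<Rightarrow> real" where
  "divdiff [] f = 0"
| "divdiff [x] f = f x"
| "divdiff (x # y # zs) f =
     (divdiff (y # zs) f - divdiff (butlast (x # y # zs)) f) / (last (y # zs) - x)"

definition m_convex :: "nat \<Rightarrow> real set \<Rightarrow> (real \<Rightarrow> real) \<Rightarrow> bool" where
  "m_convex m I f \<longleftrightarrow>
     (\<forall>xs. length xs = m + 2 \<and> distinct xs \<and> set xs \<subseteq> I \<longrightarrow> divdiff xs f \<ge> 0)"

end

theory Submission imports Defs begin

definition dd :: "real set \<Rightarrow> (real \<Rightarrow> real) \<Rightarrow> real" where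
  "dd A f = (\<Sum>a\<in>A. f a / (\<Prod>b\<in>A-{a}. (a - b)))"

lemma dd_cong: "(\<And>a. a \<in> A \<Longrightarrow> f a = g a) \<Longrightarrow> dd A f = dd A g"
  unfolding dd_def by (rule sum.cong) auto

lemma dd_single[simp]: "dd {a} f = f a"
  unfolding dd_def by simp

lemma dd_insert:
  assumes "finite T" "s \<notin> T"
  shows "dd (insert s T) f = f s / (\<Prod>t\<in>T. (s - t))
     + (\<Sum>t\<in>T. f t / ((t - s) * (\<Prod>u\<in>T-{t}. (t - u))))"
proof -
  have "dd (insert s T) f = f s / (\<Prod>b\<in>insert s T-{s}. (s - b))
     + (\<Sum>a\<in>T. f a / (\<Prod>b\<in>insert s T-{a}. (a - b)))"
    unfolding dd_def using assms by (simp add: sum.insert)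
  also have "insert s T - {s} = T" using assms by auto
  also have "(\<Sum>a\<in>T. f a / (\<Prod>b\<in>insert s T-{a}. (a - b)))
     = (\<Sum>t\<in>T. f t / ((t - s) * (\<Prod>u\<in>T-{t}. (t - u))))"
  proof (rule sum.cong)
    fix t assume t: "t \<in> T"
    have "insert s T - {t} = insert s (T - {t})" using t assms by auto
    then show "f t / (\<Prod>b\<in>insert s T-{t}. (t - b)) = f t / ((t - s) * (\<Prod>u\<in>T-{t}. (t - u)))"
      using assms by (simp add: prod.insert)
  qed simp
  finally show ?thesis .
qed

lemma prod_nz: "finite T \<Longrightarrow> s \<notin> T \<Longrightarrow> (\<Prod>t\<in>T. (s - t)) \<noteq> (0::real)"
  by (simp add: prod_zero_iff)

lemma dd_rec:
  assumes "finite B" "x \<notin> B" "z \<notin> B" "x \<noteq> z"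
  shows "dd (insert x (insert z B)) f = (dd (insert z B) f - dd (insert x B) f) / (z - x)"
proof -
  define W where "W t = (\<Prod>u\<in>B-{t}. (t - u))" for t
  have W: "t \<in> B \<Longrightarrow> W t \<noteq> 0" for t unfolding W_def using assms(1) by (simp add: prod_zero_iff)
  have px: "(\<Prod>t\<in>B. (x - t)) \<noteq> 0" "(\<Prod>t\<in>B. (z - t)) \<noteq> 0" using assms prod_nz by auto
  have "dd (insert x (insert z B)) f = f x / (\<Prod>t\<in>insert z B. (x - t))
     + (\<Sum>t\<in>insert z B. f t / ((t - x) * (\<Prod>u\<in>insert z B-{t}. (t - u))))"
    using assms by (simp add: dd_insert)
  also have "(\<Sum>t\<in>insert z B. f t / ((t - x) * (\<Prod>u\<in>insert z B-{t}. (t - u))))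
     = f z / ((z - x) * (\<Prod>u\<in>B. (z - u))) + (\<Sum>t\<in>B. f t / ((t - x) * ((t - z) * W t)))"
  proof -
    have e1: "insert z B - {z} = B" using assms by auto
    have "(\<Sum>t\<in>B. f t / ((t - x) * (\<Prod>u\<in>insert z B-{t}. (t - u)))) = (\<Sum>t\<in>B. f t / ((t - x) * ((t - z) * W t)))"
    proof (rule sum.cong)
      fix t assume t: "t \<in> B"
      have "insert z B - {t} = insert z (B - {t})" using t assms by auto
      then show "f t / ((t - x) * (\<Prod>u\<in>insert z B-{t}. (t - u))) = f t / ((t - x) * ((t - z) * W t))"
        using assms unfolding W_def by (simp add: prod.insert)
    qed simp
    then show ?thesis using assms e1 by (simp add: sum.insert)
  qed
  also have "(\<Prod>t\<in>insert z B. (x - t)) = (x - z) * (\<Prod>t\<in>B. (x - t))" using assms by simp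
  finally have L: "dd (insert x (insert z B)) f = f x / ((x - z) * (\<Prod>t\<in>B. (x - t))) +
     (f z / ((z - x) * (\<Prod>u\<in>B. (z - u))) + (\<Sum>t\<in>B. f t / ((t - x) * ((t - z) * W t))))" .
  have Z: "dd (insert z B) f = f z / (\<Prod>t\<in>B. (z - t)) + (\<Sum>t\<in>B. f t / ((t - z) * W t))"
    using assms by (simp add: dd_insert W_def)
  have X: "dd (insert x B) f = f x / (\<Prod>t\<in>B. (x - t)) + (\<Sum>t\<in>B. f t / ((t - x) * W t))"
    using assms by (simp add: dd_insert W_def)
  have S: "(\<Sum>t\<in>B. f t / ((t - x) * ((t - z) * W t))) =
     ((\<Sum>t\<in>B. f t / ((t - z) * W t)) - (\<Sum>t\<in>B. f t / ((t - x) * W t))) / (z - x)"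
    unfolding sum_subtractf[symmetric] sum_divide_distrib
  proof (rule sum.cong)
    fix t assume t: "t \<in> B"
    have "t - x \<noteq> 0" "t - z \<noteq> 0" "W t \<noteq> 0" "z - x \<noteq> 0" using t assms W by auto
    then show "f t / ((t - x) * ((t - z) * W t)) = (f t / ((t - z) * W t) - f t / ((t - x) * W t)) / (z - x)"
      by (simp add: divide_simps) (simp add: algebra_simps)
  qed simp
  have gen: "\<And>P Q a b c d. P \<noteq> 0 \<Longrightarrow> Q \<noteq> 0 \<Longrightarrow> a / ((x - z) * P) + (b / ((z - x) * Q) + (c - d) / (z - x))
     = ((b / Q + c) - (a / P + d)) / (z - x)"
    using assms(4) by (simp add: divide_simps) (simp add: algebra_simps)
  show ?thesis unfolding L Z X S using px by (rule gen)
qed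

lemma divdiff_dd: "distinct xs \<Longrightarrow> xs \<noteq> [] \<Longrightarrow> divdiff xs f = dd (set xs) f"
proof (induction xs f rule: divdiff.induct)
  case (3 x y zs f)
  define z where "z = last (y # zs)"
  define B where "B = set (butlast (y # zs))"
  have yz: "y # zs = butlast (y # zs) @ [z]" unfolding z_def by simp
  have d: "distinct (butlast (y # zs) @ [z])" using 3(3) yz by (metis distinct.simps(2))
  have zB: "z \<notin> B" using d unfolding B_def by simp
  have xz: "x \<notin> set (y # zs)" using 3(3) by simp
  have "B \<subseteq> set (y # zs)" unfolding B_def using in_set_butlastD by fast
  moreover have "z \<in> set (y # zs)" unfolding z_def by (rule last_in_set) simp
  ultimately have xB: "x \<notin> B" "x \<noteq> z" using xz by auto
  have s1: "set (y # zs) = insert z B" unfolding B_def by (subst yz) auto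
  have bl: "butlast (x # y # zs) = x # butlast (y # zs)" by simp
  have h1: "divdiff (y # zs) f = dd (insert z B) f" using 3(1) 3(3) s1 by simp
  have h2: "divdiff (butlast (x # y # zs)) f = dd (insert x B) f"
    using 3(2) 3(3) distinct_butlast[of "x # y # zs"] unfolding bl B_def by simp
  have "divdiff (x # y # zs) f = (dd (insert z B) f - dd (insert x B) f) / (z - x)"
    unfolding divdiff.simps(3) h1 h2 z_def ..
  also have "\<dots> = dd (insert x (insert z B)) f"
    using dd_rec[of B x z f] xB zB unfolding B_def by simp
  also have "insert x (insert z B) = set (x # y # zs)" using s1 by simp
  finally show ?case .
qed auto

lemma dd_div:
  assumes "finite A" "A \<noteq> {}" "c \<notin> A"
  shows "dd A (\<lambda>t. (f t - f c) / (t - c)) = dd (insert c A) f"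
  using assms
proof (induction "card A" arbitrary: A rule: less_induct)
  case less
  show ?case
  proof (cases "card A = 1")
    case True
    then obtain a where A: "A = {a}" by (auto simp: card_Suc_eq)
    have "a \<noteq> c" using less A by auto
    have "dd (insert c {a}) f = f c / (c - a) + f a / (a - c)"
      using dd_insert[of "{a}" c f] \<open>a \<noteq> c\<close> by simp
    moreover have "(f a - f c) / (a - c) = f c / (c - a) + f a / (a - c)"
      using \<open>a \<noteq> c\<close> by (simp add: divide_simps) (simp add: algebra_simps)
    ultimately show ?thesis unfolding A by simp
  next
    case False
    then have "card A \<ge> 2" using less(2,3) by (metis One_nat_def card_0_eq less_2_cases not_le)
    then obtain x z B where A: "A = insert x (insert z B)" "x \<notin> insert z B" "z \<notin> B"
      by (auto simp: numeral_2_eq_2 card_le_Suc_iff)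
    have fB: "finite B" using less(2) A by simp
    let ?g = "\<lambda>t. (f t - f c) / (t - c)"
    have "dd A ?g = (dd (insert z B) ?g - dd (insert x B) ?g) / (z - x)"
      unfolding A(1) using dd_rec fB A by auto
    also have "dd (insert z B) ?g = dd (insert c (insert z B)) f"
      using less(1)[of "insert z B"] less(2,4) A fB by (auto simp: card_insert_if)
    also have "dd (insert x B) ?g = dd (insert c (insert x B)) f"
      using less(1)[of "insert x B"] less(2,4) A fB by (auto simp: card_insert_if)
    also have "(dd (insert c (insert z B)) f - dd (insert c (insert x B)) f) / (z - x)
        = dd (insert x (insert z (insert c B))) f"
      using dd_rec[of "insert c B" x z f] fB A less(4) by (simp add: insert_commute)
    also have "insert x (insert z (insert c B)) = insert c A" using A by auto
    finally show ?thesis .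
  qed
qed

definition conv :: "nat \<Rightarrow> real set \<Rightarrow> (real \<Rightarrow> real) \<Rightarrow> bool" where
  "conv N S f \<longleftrightarrow> (\<forall>A. A \<subseteq> S \<longrightarrow> finite A \<longrightarrow> card A = N \<longrightarrow> 0 \<le> dd A f)"

lemma cont_c:
  fixes T :: "real set" and H :: "real \<Rightarrow> real"
  assumes "finite T" "x \<notin> T" and that: "((\<lambda>s. s) \<longlongrightarrow> x) F"
  shows "((\<lambda>s. \<Sum>t\<in>T. H t / ((t - s) * (\<Prod>u\<in>T-{t}. (t - u)))) \<longlongrightarrow>
          (\<Sum>t\<in>T. H t / ((t - x) * (\<Prod>u\<in>T-{t}. (t - u))))) F"
proof (rule tendsto_sum)
  fix t assume t: "t \<in> T"
  have "(\<Prod>u\<in>T-{t}. (t - u)) \<noteq> 0" using assms(1) by (simp add: prod_zero_iff)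
  moreover have "t - x \<noteq> 0" using t assms by auto
  ultimately show "((\<lambda>s. H t / ((t - s) * (\<Prod>u\<in>T-{t}. (t - u)))) \<longlongrightarrow>
          H t / ((t - x) * (\<Prod>u\<in>T-{t}. (t - u)))) F"
    by (intro tendsto_intros that) auto
qed

lemma ext_conv:
  assumes cv: "conv N S H" and N: "N \<ge> 2" and xS: "x \<notin> S" and d: "\<delta> > 0"
    and nb: "{x-\<delta><..<x+\<delta>} - {x} \<subseteq> S"
  shows "\<exists>v. conv N (insert x S) (H(x:=v))"
proof -
  obtain U where U: "finite U" "card U = N - 1" "U \<subseteq> {x-\<delta><..<x}"
    using infinite_arbitrarily_large[of "{x-\<delta><..<x}" "N - 1"] d by auto
  have "U \<noteq> {}" using U N by auto
  then obtain s0 where s0: "s0 \<in> U" by auto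
  define T0 where "T0 = U - {s0}"
  have US: "U \<subseteq> S" using U nb by force
  have T0: "finite T0" "card T0 = N - 2" "s0 \<notin> T0" "T0 \<subseteq> S" "x \<notin> T0"
    using U s0 US unfolding T0_def by (auto simp: card_Diff_singleton)
  define I where "I = {x<..<x+\<delta>}"
  have IS: "I \<subseteq> S" using nb unfolding I_def by auto
  have IT: "s \<in> I \<Longrightarrow> s \<notin> T0" for s using U unfolding I_def T0_def by auto
  have s0S: "s0 \<in> S" "s0 < x" using U s0 US by auto
  define \<phi> where "\<phi> s = dd (insert s T0) H" for s
  have mono: "\<phi> s \<le> \<phi> s'" if "s \<in> S" "s' \<in> S" "s \<notin> T0" "s' \<notin> T0" "s < s'" for s s'
  proof -
    have "0 \<le> dd (insert s' (insert s T0)) H"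
      using cv that T0 N unfolding conv_def by (auto simp: card_insert_if)
    also have "\<dots> = (\<phi> s - \<phi> s') / (s - s')" unfolding \<phi>_def using dd_rec that T0 by auto
    finally show ?thesis using that by (simp add: zero_le_divide_iff)
  qed
  have Ine: "I \<noteq> {}" unfolding I_def using d by auto
  have bdd: "bdd_below (\<phi> ` I)"
  proof (rule bdd_belowI[of _ "\<phi> s0"])
    fix y assume "y \<in> \<phi> ` I"
    then obtain s where s: "s \<in> I" "y = \<phi> s" by blast
    have "s0 < s" using s(1) s0S unfolding I_def by simp
    then show "\<phi> s0 \<le> y" using mono[of s0 s] s IS IT s0S T0 by blast
  qed
  define L where "L = Inf (\<phi> ` I)"
  have lim\<phi>: "(\<phi> \<longlongrightarrow> L) (at_right x)"
  proof (rule order_tendstoI)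
    fix a assume "a < L"
    moreover have "eventually (\<lambda>s. s \<in> I) (at_right x)" unfolding I_def using eventually_at_right_real[of x "x+\<delta>"] d by simp
    ultimately show "eventually (\<lambda>s. a < \<phi> s) (at_right x)"
    proof (elim eventually_mono)
      fix s assume "s \<in> I"
      then have "L \<le> \<phi> s" unfolding L_def using bdd by (simp add: cInf_lower)
      then show "a < \<phi> s" using \<open>a < L\<close> by simp
    qed
  next
    fix a assume "L < a"
    have "\<phi> ` I \<noteq> {}" using Ine by simp
    from cInf_lessD[OF this] \<open>L < a\<close> have "\<exists>y\<in>\<phi> ` I. y < a" unfolding L_def by blast
    then obtain s1 where s1: "s1 \<in> I" "\<phi> s1 < a" by blast
    have "x < s1" using s1 by (simp add: I_def)
    then have "eventually (\<lambda>s. s \<in> {x<..<s1}) (at_right x)" by (rule eventually_at_right_real)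
    then show "eventually (\<lambda>s. \<phi> s < a) (at_right x)"
    proof (rule eventually_mono)
      fix s assume "s \<in> {x<..<s1}"
      then have "s \<in> I" using s1 by (auto simp: I_def)
      moreover have "s < s1" using \<open>s \<in> {x<..<s1}\<close> by simp
      ultimately have "\<phi> s \<le> \<phi> s1" using mono[of s s1] IS IT s1 by blast
      then show "\<phi> s < a" using s1 by simp
    qed
  qed
  define w where "w s = (\<Prod>t\<in>T0. (s - t))" for s
  define c where "c s = (\<Sum>t\<in>T0. H t / ((t - s) * (\<Prod>u\<in>T0-{t}. (t - u))))" for s
  have Hphi: "H s = w s * (\<phi> s - c s)" if "s \<in> I" for s
  proof -
    have "w s \<noteq> 0" unfolding w_def using prod_nz T0 IT that by auto
    then show ?thesis unfolding \<phi>_def w_def c_def using dd_insert[of T0 s H] T0 IT that by simp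
  qed
  define v where "v = w x * (L - c x)"
  have limH: "(H \<longlongrightarrow> v) (at_right x)"
  proof -
    have "((\<lambda>s. w s * (\<phi> s - c s)) \<longlongrightarrow> v) (at_right x)"
      unfolding v_def
      by (intro tendsto_mult tendsto_diff lim\<phi>) (auto simp: w_def c_def intro!: tendsto_prod tendsto_diff cont_c T0 tendsto_ident_at)
    moreover have "eventually (\<lambda>s. w s * (\<phi> s - c s) = H s) (at_right x)"
    proof -
      have "eventually (\<lambda>s. s \<in> I) (at_right x)" unfolding I_def using eventually_at_right_real[of x "x+\<delta>"] d by simp
      then show ?thesis by (elim eventually_mono) (simp add: Hphi)
    qed
    ultimately show ?thesis by (rule Lim_transform_eventually)
  qed
  show ?thesis
  proof (intro exI[of _ v], unfold conv_def, intro allI impI)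
    fix A assume A: "A \<subseteq> insert x S" "finite A" "card A = N"
    show "0 \<le> dd A (H(x := v))"
    proof (cases "x \<in> A")
      case False
      then have "dd A (H(x := v)) = dd A H" by (intro dd_cong) auto
      then show ?thesis using cv A False unfolding conv_def by auto
    next
      case True
      define T where "T = A - {x}"
      have T: "finite T" "T \<subseteq> S" "x \<notin> T" "A = insert x T" "card T = N - 1"
        using A True unfolding T_def by auto
      define wT where "wT s = (\<Prod>t\<in>T. (s - t))" for s
      define cT where "cT s = (\<Sum>t\<in>T. H t / ((t - s) * (\<Prod>u\<in>T-{t}. (t - u))))" for s
      have "dd A (H(x := v)) = (H(x := v)) x / wT x + (\<Sum>t\<in>T. (H(x := v)) t / ((t - x) * (\<Prod>u\<in>T-{t}. (t - u))))"
        unfolding T(4) wT_def by (rule dd_insert[OF T(1,3)])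
      also have "(\<Sum>t\<in>T. (H(x := v)) t / ((t - x) * (\<Prod>u\<in>T-{t}. (t - u)))) = cT x"
        unfolding cT_def by (rule sum.cong) (use T in auto)
      also have "(H(x := v)) x = v" by simp
      finally have eq: "dd A (H(x := v)) = v / wT x + cT x" .
      have wx: "wT x \<noteq> 0" unfolding wT_def using prod_nz T by auto
      have lim: "((\<lambda>s. H s / wT s + cT s) \<longlongrightarrow> v / wT x + cT x) (at_right x)"
      proof (intro tendsto_add tendsto_divide limH)
        show "(wT \<longlongrightarrow> wT x) (at_right x)" unfolding wT_def
          by (auto intro!: tendsto_prod tendsto_diff tendsto_ident_at)
        show "(cT \<longlongrightarrow> cT x) (at_right x)" unfolding cT_def
          by (rule cont_c[OF T(1,3)]) (rule tendsto_ident_at)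
      qed (rule wx)
      have ev1: "eventually (\<lambda>s. \<forall>t\<in>T. s \<noteq> t) (at_right x)"
      proof (rule eventually_ball_finite[OF T(1)], intro ballI)
        fix t assume "t \<in> T"
        show "eventually (\<lambda>s. s \<noteq> t) (at_right x)"
        proof (cases "t > x")
          case True show ?thesis using eventually_at_right_real[OF True] by (elim eventually_mono) auto
        next
          case False then show ?thesis using eventually_at_right_less[of x] by (elim eventually_mono) auto
        qed
      qed
      have ev2: "eventually (\<lambda>s. s \<in> I) (at_right x)" unfolding I_def using eventually_at_right_real[of x "x+\<delta>"] d by simp
      have "eventually (\<lambda>s. 0 \<le> H s / wT s + cT s) (at_right x)"
        using ev1 ev2
      proof (eventually_elim)
        case (elim s)
        then have sT: "s \<notin> T" "s \<in> S" using IS by auto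
        have "0 \<le> dd (insert s T) H" using cv sT T A unfolding conv_def by (auto simp: card_insert_if)
        then show ?case using dd_insert[of T s H] sT T unfolding wT_def cT_def by simp
      qed
      then have "0 \<le> v / wT x + cT x" using lim by (intro tendsto_lowerbound[OF lim]) auto
      then show ?thesis using eq by simp
    qed
  qed
qed

lemma deg_lin: "degree ([:c:] + [:-x, 1:] * Q) \<le> Suc (degree (Q::real poly))"
proof -
  have "degree ([:c:] + [:-x, 1:] * Q) \<le> max (degree [:c:]) (degree ([:-x, 1:] * Q))"
    by (rule degree_add_le_max)
  also have "degree ([:-x, 1:] * Q) \<le> degree [:-x, 1:] + degree Q" by (rule degree_mult_le)
  finally show ?thesis by simp
qed

lemma touch:
  "conv (2*k+1) S G \<Longrightarrow> finite X \<Longrightarrow> card X = k \<Longrightarrow> X \<subseteq> S \<Longrightarrow>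
   (\<forall>y\<in>X. \<exists>\<delta>>0. {y-\<delta><..<y+\<delta>} \<subseteq> S) \<Longrightarrow>
   \<exists>P. (P = 0 \<or> degree P < 2*k) \<and> (\<forall>y\<in>X. poly P y = G y) \<and> (\<forall>t\<in>S. poly P t \<le> G t)"
proof (induction k arbitrary: S G X)
  case 0
  have "\<forall>t\<in>S. 0 \<le> G t"
  proof
    fix t assume "t \<in> S"
    then have "0 \<le> dd {t} G" using 0(1) unfolding conv_def by auto
    then show "0 \<le> G t" by simp
  qed
  then show ?case using 0 by (intro exI[of _ 0]) auto
next
  case (Suc k)
  then obtain x where xX: "x \<in> X" by (metis card.empty equals0I nat.simps(3))
  define X' where "X' = X - {x}"
  have X': "finite X'" "card X' = k" "X' \<subseteq> S - {x}" "x \<notin> X'"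
    using Suc(3,4,5) xX unfolding X'_def by auto
  have xS: "x \<in> S" using xX Suc(5) by auto
  obtain \<delta> where d: "\<delta> > 0" "{x-\<delta><..<x+\<delta>} \<subseteq> S" using Suc(6) xX by auto
  define H where "H t = (G t - G x) / (t - x)" for t
  have cH: "conv (2*k+2) (S - {x}) H" unfolding conv_def
  proof (intro allI impI)
    fix A assume A: "A \<subseteq> S - {x}" "finite A" "card A = 2*k+2"
    then have "A \<noteq> {}" by auto
    then have "dd A H = dd (insert x A) G" unfolding H_def using A by (intro dd_div) auto
    moreover have "insert x A \<subseteq> S" "finite (insert x A)" "card (insert x A) = 2*Suc k+1"
      using A xS by (auto simp: subset_iff card_insert_if)
    ultimately show "0 \<le> dd A H" using Suc(2) unfolding conv_def by metis
  qed
  obtain v where cH': "conv (2*k+2) (insert x (S - {x})) (H(x:=v))"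
  proof -
    have "x \<notin> S - {x}" "{x-\<delta><..<x+\<delta>} - {x} \<subseteq> S - {x}" using d(2) by auto
    from ext_conv[OF cH _ this(1) d(1) this(2)] show ?thesis using that by auto
  qed
  have SS: "insert x (S - {x}) = S" using xS by auto
  define H' where "H' = H(x:=v)"
  define K where "K t = (H' t - H' x) / (t - x)" for t
  have cK: "conv (2*k+1) (S - {x}) K" unfolding conv_def
  proof (intro allI impI)
    fix A assume A: "A \<subseteq> S - {x}" "finite A" "card A = 2*k+1"
    then have "A \<noteq> {}" by auto
    then have "dd A K = dd (insert x A) H'" unfolding K_def using A by (intro dd_div) auto
    moreover have "insert x A \<subseteq> insert x (S - {x})" "finite (insert x A)" "card (insert x A) = 2*k+2"
      using A xS by (auto simp: subset_iff card_insert_if)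
    ultimately show "0 \<le> dd A K" using cH' unfolding conv_def H'_def by metis
  qed
  have nb: "\<forall>y\<in>X'. \<exists>\<delta>>0. {y-\<delta><..<y+\<delta>} \<subseteq> S - {x}"
  proof
    fix y assume y: "y \<in> X'"
    then obtain e where e: "e > 0" "{y-e<..<y+e} \<subseteq> S" using Suc(6) unfolding X'_def by auto
    have "y \<noteq> x" using y X' by auto
    define e' where "e' = min e \<bar>y - x\<bar>"
    have "e' > 0" using e \<open>y \<noteq> x\<close> unfolding e'_def by auto
    moreover have "{y-e'<..<y+e'} \<subseteq> {y-e<..<y+e}" unfolding e'_def by auto
    moreover have "x \<notin> {y-e'<..<y+e'}" unfolding e'_def by (auto simp: abs_if)
    ultimately have "{y-e'<..<y+e'} \<subseteq> S - {x}" using e by blast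
    moreover note \<open>e' > 0\<close>
    ultimately show "\<exists>\<delta>>0. {y-\<delta><..<y+\<delta>} \<subseteq> S - {x}" by blast
  qed
  obtain R where R: "R = 0 \<or> degree R < 2*k" "\<forall>y\<in>X'. poly R y = K y" "\<forall>t\<in>S-{x}. poly R t \<le> K t"
    using Suc(1)[OF cK X'(1,2,3) nb] by blast
  define P where "P = [:G x:] + [:-x, 1:] * ([:v:] + [:-x, 1:] * R)"
  have polyP: "poly P t = G x + (t - x) * (v + (t - x) * poly R t)" for t
    unfolding P_def by (simp add: algebra_simps)
  have Gt: "G t = G x + (t - x) * (v + (t - x) * K t)" if "t \<noteq> x" for t
    using that unfolding K_def H'_def H_def by (simp add: divide_simps)
  have deg: "P = 0 \<or> degree P < 2 * Suc k"
  proof (cases "R = 0")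
    case True
    then have "degree P \<le> 1" unfolding P_def using deg_lin[of "G x" x "[:v:]"] by simp
    then show ?thesis by simp
  next
    case False
    then have "degree R < 2*k" using R(1) by auto
    moreover have "degree P \<le> Suc (Suc (degree R))" unfolding P_def
      using deg_lin[of "G x" x "[:v:] + [:-x, 1:] * R"] deg_lin[of v x R] by simp
    ultimately show ?thesis by simp
  qed
  show ?case
  proof (intro exI[of _ P] conjI deg ballI)
    fix y assume "y \<in> X"
    show "poly P y = G y"
    proof (cases "y = x")
      case False
      then have "y \<in> X'" using \<open>y \<in> X\<close> unfolding X'_def by auto
      then show ?thesis using R(2) Gt[OF False] polyP by simp
    qed (simp add: polyP)
  next
    fix t assume "t \<in> S"
    show "poly P t \<le> G t"
    proof (cases "t = x")
      case False
      then have "poly R t \<le> K t" using R(3) \<open>t \<in> S\<close> by auto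
      then have "(t - x)^2 * poly R t \<le> (t - x)^2 * K t" by (simp add: mult_left_mono)
      then show ?thesis using Gt[OF False] polyP[of t] by (simp add: power2_eq_square algebra_simps)
    qed (simp add: polyP)
  qed
qed

theorem corollary5:
  fixes n :: nat and a b :: real and f :: "real \<Rightarrow> real" and x :: "nat \<Rightarrow> real"
  assumes "a < b"
    and "m_convex (2 * n) {a..b} f"
    and "\<forall>i\<in>{1..n}. x i \<in> {a<..<b}"
    and "x (n + 1) = b"
  shows "\<exists>p :: real poly. degree p \<le> 2 * n
           \<and> (\<forall>i\<in>{1..n+1}. poly p (x i) = f (x i))
           \<and> (\<forall>t\<in>{a..b}. poly p t \<ge> f t)"
proof -
  define X0 where "X0 = x ` {1..n}"
  have X0: "finite X0" "card X0 \<le> n" "X0 \<subseteq> {a<..<b}"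
    unfolding X0_def using assms(3) card_image_le[of "{1..n}" x] by auto
  have "infinite ({a<..<b} - X0)" using X0(1) assms(1) by (simp add: infinite_Ioo)
  then obtain Y where Y: "finite Y" "card Y = n - card X0" "Y \<subseteq> {a<..<b} - X0"
    using infinite_arbitrarily_large by blast
  define X where "X = X0 \<union> Y"
  have X: "finite X" "card X = n" "X \<subseteq> {a<..<b}" "X0 \<subseteq> X"
  proof -
    have "X0 \<inter> Y = {}" using Y by auto
    then have "card (X0 \<union> Y) = card X0 + card Y" using X0(1) Y(1) by (rule card_Un_disjoint[rotated 2])
    then show "card X = n" unfolding X_def using X0(2) Y(2) by simp
  qed (use X0 Y in \<open>auto simp: X_def\<close>)
  define S where "S = {a..<b}"
  define G where "G t = (f t - f b) / (t - b)" for t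
  have cG: "conv (2*n+1) S G" unfolding conv_def
  proof (intro allI impI)
    fix A assume A: "A \<subseteq> S" "finite A" "card A = 2*n+1"
    then have "A \<noteq> {}" "b \<notin> A" unfolding S_def by auto
    then have eq: "dd A G = dd (insert b A) f" unfolding G_def using A by (intro dd_div) auto
    define xs where "xs = sorted_list_of_set (insert b A)"
    have xs: "distinct xs" "set xs = insert b A" "length xs = 2*n + 2"
    proof -
      have fin: "finite (insert b A)" using A by simp
      show "distinct xs" unfolding xs_def by (rule distinct_sorted_list_of_set)
      show "set xs = insert b A" unfolding xs_def by (rule set_sorted_list_of_set[OF fin])
      show "length xs = 2*n + 2" unfolding xs_def length_sorted_list_of_set
        using A \<open>b \<notin> A\<close> by simp
    qed
    have "set xs \<subseteq> {a..b}" using xs(2) A assms(1) unfolding S_def by auto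
    then have "0 \<le> divdiff xs f" using assms(2) xs unfolding m_convex_def by auto
    moreover have "xs \<noteq> []" using xs by auto
    ultimately show "0 \<le> dd A G" using divdiff_dd[OF xs(1)] xs(2) eq by simp
  qed
  have nb: "\<forall>y\<in>X. \<exists>\<delta>>0. {y-\<delta><..<y+\<delta>} \<subseteq> S"
  proof
    fix y assume "y \<in> X"
    then have y: "a < y" "y < b" using X by auto
    show "\<exists>\<delta>>0. {y-\<delta><..<y+\<delta>} \<subseteq> S"
      by (rule exI[of _ "min (y - a) (b - y)"]) (use y in \<open>auto simp: S_def\<close>)
  qed
  have XS: "X \<subseteq> S" using X unfolding S_def by auto
  obtain P where P: "P = 0 \<or> degree P < 2*n" "\<forall>y\<in>X. poly P y = G y" "\<forall>t\<in>S. poly P t \<le> G t"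
    using touch[OF cG X(1,2) XS nb] by blast
  define p where "p = [:f b:] + [:-b, 1:] * P"
  have polyp: "poly p t = f b + (t - b) * poly P t" for t unfolding p_def by (simp add: algebra_simps)
  have fG: "f t = f b + (t - b) * G t" if "t \<noteq> b" for t using that unfolding G_def by simp
  show ?thesis
  proof (intro exI[of _ p] conjI ballI)
    show "degree p \<le> 2 * n"
    proof (cases "P = 0")
      case True then show ?thesis unfolding p_def by simp
    next
      case False then show ?thesis using P(1) deg_lin[of "f b" b P] unfolding p_def by simp
    qed
  next
    fix i assume i: "i \<in> {1..n+1}"
    show "poly p (x i) = f (x i)"
    proof (cases "i = n + 1")
      case True then show ?thesis using assms(4) polyp by simp
    next
      case False
      then have "x i \<in> X" using i X(4) unfolding X0_def by auto
      moreover then have "x i \<noteq> b" using X by auto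
      ultimately show ?thesis using P(2) polyp fG by simp
    qed
  next
    fix t assume t: "t \<in> {a..b}"
    show "f t \<le> poly p t"
    proof (cases "t = b")
      case True then show ?thesis using polyp by simp
    next
      case False
      then have "t \<in> S" "t - b < 0" using t unfolding S_def by auto
      then have "(t - b) * G t \<le> (t - b) * poly P t" using P(3) by (simp add: mult_left_mono_neg)
      then show ?thesis using fG[OF False] polyp by simp
    qed
  qed
qed

end
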